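(* Let a document collection $\mathcal{D}$ be partitioned into $n$ pairwise disjoint shards $D_1,\dots,D_n$, and let $r\ge 1$ identical replicas of this partition be stored, each of the $nr$ shard replicas on its own node. Fix a query $q$ with a unique relevant document $d_q$, and let $p(j)$ be the probability that $d_q$ is stored in $D_j$ (so $\sum_{j=1}^n p(j)=1$). Each node independently fails to respond with probability $f\in[0,1]$, independently of the location of $d_q$. A selection chooses some replicas of some shards; for $1\le i\le r$ let $S_i\subseteq\{D_1,\dots,D_n\}$ be the set of shards of which at least $i$ replicas are selected (so $S_r\subseteq S_{r-1}\subseteq\dots\subseteq S_1$). Let $SP(f,\bigcup_{i=1}^r S_i)$ denote the probability that $d_q$ is found, i.e., that $d_q$ lies in a shard of which some selected replica responds. Then \[ SP\Big(f,\bigcup_{i=1}^r S_i\Big)=(1-f)\left(\sum_{D_j\in S_1}p(j)+\sum_{D_j\in S_2}f\,p(j)+\dots+\sum_{D_j\in S_r}f^{r-1}p(j)\right). \]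
   Context: Distributed search model: each node searches only its own shard replica; the query is sent to the selected replicas, and the results of nodes that fail to respond (probability $f$ each, independently) are dropped. *)

theory Defs
  imports "HOL-Probability.Probability"
begin

text \<open>Shards are indexed by j in {..<n}, replicas by l in {..<r}; node (j,l) stores
 replica l of shard j.
 A failure configuration F assigns True to the nodes that fail to respond; each node
 fails independently with probability f (Bernoulli), independently of the location.\<close>

definition fail_pmf :: "nat \<Rightarrow> nat \<Rightarrow> real \<Rightarrow> (nat \<times> nat \<Rightarrow> bool) pmf" where
  "fail_pmf n r f = Pi_pmf ({..<n} \<times> {..<r}) False (\<lambda>_. bernoulli_pmf f)"

definition SP :: "nat pmf \<Rightarrow> nat \<Rightarrow> nat \<Rightarrow> real \<Rightarrow> (nat \<times> nat) set \<Rightarrow> real" where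
  "SP loc n r f Sel =
     measure_pmf.prob (pair_pmf loc (fail_pmf n r f))
       {(d, F). \<exists>l. (d, l) \<in> Sel \<and> \<not> F (d, l)}"

definition sel_shards :: "nat \<Rightarrow> (nat \<times> nat) set \<Rightarrow> nat \<Rightarrow> nat set" where
  "sel_shards n Sel i = {j \<in> {..<n}. i \<le> card {l. (j, l) \<in> Sel}}"

end

theory Submission
  imports Defs
begin

lemma geom_aux: "(1 - f) * (\<Sum>i = 1..c. (f::real) ^ (i - 1)) = 1 - f ^ c"
proof (induction c)
  case 0 then show ?case by simp
next
  case (Suc c)
  have "(\<Sum>i = 1..Suc c. f ^ (i - 1)) = (\<Sum>i = 1..c. f ^ (i - 1)) + f ^ c"
    by (simp add: sum.cl_ivl_Suc)
  then have "(1 - f) * (\<Sum>i = 1..Suc c. f ^ (i - 1)) = (1 - f) * (\<Sum>i = 1..c. f ^ (i - 1)) + (1 - f) * f ^ c"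
    by (simp add: distrib_left)
  also have "\<dots> = 1 - f ^ Suc c" using Suc.IH by (simp add: algebra_simps)
  finally show ?case .
qed

lemma fail_prob:
  fixes f :: real
  assumes "0 \<le> f" "f \<le> 1" "d < n" "L \<subseteq> {..<r}"
  shows "measure_pmf.prob (fail_pmf n r f) {F. \<forall>l\<in>L. F (d, l)} = f ^ card L"
proof -
  define A where "A = {..<n} \<times> {..<r}"
  define B where "B = (\<lambda>x. if x \<in> {d} \<times> L then {True} else (UNIV :: bool set))"
  have fin: "finite A" by (simp add: A_def)
  have e: "Pi A B = {F. \<forall>l\<in>L. F (d, l)}"
    using assms by (auto simp: A_def B_def Pi_def)
  have "measure_pmf.prob (fail_pmf n r f) (Pi A B)
      = (\<Prod>x\<in>A. measure_pmf.prob (bernoulli_pmf f) (B x))"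
    unfolding fail_pmf_def A_def[symmetric] by (rule measure_Pi_pmf_Pi[OF fin])
  also have "\<dots> = (\<Prod>x\<in>A. if x \<in> {d} \<times> L then f else 1)"
    using assms by (intro prod.cong refl) (auto simp: B_def measure_pmf_single)
  also have "\<dots> = (\<Prod>x\<in>A \<inter> ({d} \<times> L). f)"
    using fin by (simp add: prod.If_cases)
  also have "A \<inter> ({d} \<times> L) = {d} \<times> L" using assms by (auto simp: A_def)
  also have "(\<Prod>x\<in>{d} \<times> L. f) = f ^ card L"
    by (simp add: card_cartesian_product)
  finally show ?thesis using e by simp
qed

theorem lemma1:
  fixes n r :: nat and f :: real and loc :: "nat pmf" and Sel :: "(nat \<times> nat) set"
  assumes "r \<ge> 1"
    and "set_pmf loc \<subseteq> {..<n}"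
    and "0 \<le> f" and "f \<le> 1"
    and "Sel \<subseteq> {..<n} \<times> {..<r}"
  shows "SP loc n r f Sel =
    (1 - f) * (\<Sum>i = 1..r. \<Sum>j \<in> sel_shards n Sel i. f ^ (i - 1) * pmf loc j)"
proof -
  define E where "E = {(d, F). \<exists>l. (d, l) \<in> Sel \<and> \<not> F (d, l)}"
  define Ld where "Ld = (\<lambda>d. {l. (d, l) \<in> Sel})"
  define c where "c = (\<lambda>d. card (Ld d))"
  define g where "g = (\<lambda>d. 1 - f ^ c d)"
  let ?M = "fail_pmf n r f"
  have Ld_sub: "Ld d \<subseteq> {..<r}" for d using assms(5) by (auto simp: Ld_def)
  have c_le: "c d \<le> r" for d
    unfolding c_def using card_mono[OF _ Ld_sub[of d]] by simp
  have g_nn: "0 \<le> g d" for d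
    unfolding g_def using assms(3,4) by (simp add: power_le_one)
  have step1: "measure_pmf.prob ?M {F. (d, F) \<in> E} = g d" if "d < n" for d
  proof -
    have "{F. (d, F) \<in> E} = UNIV - {F. \<forall>l\<in>Ld d. F (d, l)}"
      by (auto simp: E_def Ld_def)
    hence "measure_pmf.prob ?M {F. (d, F) \<in> E} = 1 - measure_pmf.prob ?M {F. \<forall>l\<in>Ld d. F (d, l)}"
      using measure_pmf.prob_compl[of "{F. \<forall>l\<in>Ld d. F (d, l)}" ?M] by simp
    also have "\<dots> = g d"
      using fail_prob[OF assms(3,4) that Ld_sub[of d]] by (simp add: g_def c_def)
    finally show ?thesis .
  qed
  have step2: "emeasure (pair_pmf loc ?M) E = (\<integral>\<^sup>+d. emeasure ?M {F. (d, F) \<in> E} \<partial>loc)"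
  proof -
    have "emeasure (pair_pmf loc ?M) E = (\<integral>\<^sup>+d. \<integral>\<^sup>+y. indicator E (d, y) \<partial>?M \<partial>loc)"
      unfolding pair_pmf_def by simp
    also have "\<dots> = (\<integral>\<^sup>+d. \<integral>\<^sup>+y. indicator {F. (d, F) \<in> E} y \<partial>?M \<partial>loc)"
      by (intro nn_integral_cong) (simp split: split_indicator)
    also have "\<dots> = (\<integral>\<^sup>+d. emeasure ?M {F. (d, F) \<in> E} \<partial>loc)"
      by (intro nn_integral_cong) simp
    finally show ?thesis .
  qed
  have step3: "(\<integral>\<^sup>+d. emeasure ?M {F. (d, F) \<in> E} \<partial>loc) = (\<integral>\<^sup>+d. ennreal (g d) \<partial>loc)"
    using assms(2) step1
    by (intro nn_integral_cong_AE) (auto simp: AE_measure_pmf_iff measure_pmf.emeasure_eq_measure)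
  have step4: "(\<integral>\<^sup>+d. ennreal (g d) \<partial>loc) = (\<Sum>d\<in>{..<n}. ennreal (g d) * pmf loc d)"
    using assms(2) by (intro nn_integral_measure_pmf_support) auto
  also have "\<dots> = ennreal (\<Sum>d\<in>{..<n}. g d * pmf loc d)"
    using g_nn by (simp add: ennreal_mult sum_ennreal[symmetric])
  finally have "emeasure (pair_pmf loc ?M) E = ennreal (\<Sum>d\<in>{..<n}. g d * pmf loc d)"
    using step2 step3 by simp
  hence SPeq: "SP loc n r f Sel = (\<Sum>d\<in>{..<n}. g d * pmf loc d)"
    unfolding SP_def E_def[symmetric] measure_pmf.emeasure_eq_measure
    using g_nn by (simp add: sum_nonneg)
  have inner: "(\<Sum>j \<in> sel_shards n Sel i. f ^ (i - 1) * pmf loc j)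
        = (\<Sum>j\<in>{..<n}. if i \<le> c j then f ^ (i - 1) * pmf loc j else 0)" for i
  proof -
    have "sel_shards n Sel i = {j \<in> {..<n}. i \<le> c j}"
      by (auto simp: sel_shards_def c_def Ld_def)
    then show ?thesis
      using sum.inter_filter[of "{..<n}" "\<lambda>j. f ^ (i - 1) * pmf loc j" "\<lambda>j. i \<le> c j"]
      by simp
  qed
  have "(\<Sum>i = 1..r. \<Sum>j \<in> sel_shards n Sel i. f ^ (i - 1) * pmf loc j)
      = (\<Sum>i = 1..r. \<Sum>j\<in>{..<n}. if i \<le> c j then f ^ (i - 1) * pmf loc j else 0)"
    by (simp only: inner)
  also have "\<dots> = (\<Sum>j\<in>{..<n}. \<Sum>i = 1..r. if i \<le> c j then f ^ (i - 1) * pmf loc j else 0)"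
    by (rule sum.swap)
  also have "\<dots> = (\<Sum>j\<in>{..<n}. (\<Sum>i = 1..c j. f ^ (i - 1)) * pmf loc j)"
  proof (intro sum.cong refl)
    fix j
    have "(\<Sum>i = 1..r. if i \<le> c j then f ^ (i - 1) * pmf loc j else 0)
        = (\<Sum>i \<in> {1..r} \<inter> {i. i \<le> c j}. f ^ (i - 1) * pmf loc j)"
      by (simp add: sum.If_cases)
    also have "{1..r} \<inter> {i. i \<le> c j} = {1..c j}" using c_le[of j] by auto
    finally show "(\<Sum>i = 1..r. if i \<le> c j then f ^ (i - 1) * pmf loc j else 0)
        = (\<Sum>i = 1..c j. f ^ (i - 1)) * pmf loc j"
      by (simp add: sum_distrib_right)
  qed
  finally have eqS: "(\<Sum>i = 1..r. \<Sum>j \<in> sel_shards n Sel i. f ^ (i - 1) * pmf loc j)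
      = (\<Sum>j\<in>{..<n}. (\<Sum>i = 1..c j. f ^ (i - 1)) * pmf loc j)" .
  have "(1 - f) * (\<Sum>i = 1..r. \<Sum>j \<in> sel_shards n Sel i. f ^ (i - 1) * pmf loc j)
      = (\<Sum>j\<in>{..<n}. ((1 - f) * (\<Sum>i = 1..c j. f ^ (i - 1))) * pmf loc j)"
    unfolding eqS by (simp only: sum_distrib_left mult.assoc[symmetric])
  also have "\<dots> = (\<Sum>d\<in>{..<n}. g d * pmf loc d)"
    by (simp only: geom_aux g_def)
  finally show ?thesis using SPeq by simp
qed

end
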